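(* Let $m\ge1$, $n\ge1$ and $t=\lfloor\frac{n-1}{3}\rfloor$. Then the Multidimensional Graded Consensus protocol MGC (described in the context) is an $m$-dimensional $(n,t)$-graded consensus protocol.
   Context: Network model: $n$ players, set of players common knowledge; every pair joined by a direct private channel; synchronous steps, instantaneous delivery; at most $t$ players malicious (arbitrary behaviour), honest players follow the protocol and send the same message to everyone. For player $i$, step $s$, component $c$ and value $v$, $\#_i^s(v,c)$ is the number of distinct players from which $i$ received in step $s$ a valid vector message whose $c$-th component is $v$ (counting its own); conflicting messages from one sender in a step are both discarded, duplicates count once. Definition: a protocol in which each player $i$ privately knows an initial vector $\mathbf{v}_i'=(v'_{i,1},\dots,v'_{i,m})$ with $v'_{i,c}\in V\cup\{\bot\}$ ($\bot\notin V$) is an $m$-dimensional $(n,t)$-graded consensus protocol if in every execution with $n$ players of which at most $t$ are malicious, every honest $i$ halts outputting $((v_{i,1},g_{i,1}),\dots,(v_{i,m},g_{i,m}))$ with $g_{i,c}\in\{0,1,2\}$, $v_{i,c}\in V\cup\{\bot\}$, such that: (1) for all honest $i,j$ and all $c$, $|g_{i,c}-g_{j,c}|\le1$; (2) for all honest $i,j$ and all $c$ with $g_{i,c},g_{j,c}>0$, $v_{i,c}=v_{j,c}\neq\bot$; (3) if $v'_{1,c}=\dots=v'_{n,c}=v_c$ for some $v_c\in V\cup\{\bot\}$, then every honest $i$ outputs $(v_{i,c},g_{i,c})=(v_c,2)$ if $v_c\ne\bot$ and $(\bot,0)$ if $v_c=\bot$. Protocol MGC: STEP 1: each player $i$ sends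 $\mathbf{v}_i'$ to all players. STEP 2: each $i$ sends to all the vector $\tilde{\mathbf{v}}_i$ with $\tilde v_{i,c}=v$ if $\#_i^1(v,c)\ge\lfloor\frac{2n}{3}\rfloor+1$, and $\tilde v_{i,c}=\bot$ otherwise. OUTPUT: for each $c$, if for some $x\neq\bot$, $\#_i^2(x,c)\ge\lfloor\frac{2n}{3}\rfloor+1$ then $(v_{i,c},g_{i,c})=(x,2)$; else if for some $x\ne\bot$, $\#_i^2(x,c)\ge\lfloor\frac n3\rfloor+1$ then $(v_{i,c},g_{i,c})=(x,1)$; else $(v_{i,c},g_{i,c})=(\bot,0)$. *)

theory Defs
  imports Main
begin

text \<open>Players are 0,...,n-1; components are 0,...,m-1.  Values of V are
elements of the type 'v, and the special symbol bot is None.\<close>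

type_synonym 'v vec = "nat \<Rightarrow> 'v option"

text \<open>Effective messages received in one step: inbox i j is the vector message
that recipient i accepts from sender j in that step (None if j sent nothing valid,
or sent conflicting messages, which are discarded).\<close>
type_synonym 'v inbox = "nat \<Rightarrow> nat \<Rightarrow> 'v vec option"

definition cnt :: "nat \<Rightarrow> 'v inbox \<Rightarrow> nat \<Rightarrow> nat \<Rightarrow> 'v option \<Rightarrow> nat" where
  "cnt n r i c v = card {j \<in> {0..<n}. \<exists>w. r i j = Some w \<and> w c = v}"

definition step_inbox :: "nat set \<Rightarrow> (nat \<Rightarrow> 'v vec) \<Rightarrow> 'v inbox \<Rightarrow> 'v inbox" where
  "step_inbox B msg adv = (\<lambda>i j. if j \<in> B then adv i j else Some (msg j))"

definition mgc_tilde :: "nat \<Rightarrow> 'v inbox \<Rightarrow> nat \<Rightarrow> 'v vec" where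
  "mgc_tilde n r1 i = (\<lambda>c.
     if \<exists>v. cnt n r1 i c v \<ge> (2 * n) div 3 + 1
     then (SOME v. cnt n r1 i c v \<ge> (2 * n) div 3 + 1) else None)"

definition mgc_output :: "nat \<Rightarrow> 'v inbox \<Rightarrow> nat \<Rightarrow> nat \<Rightarrow> 'v option \<times> nat" where
  "mgc_output n r2 i c =
     (if \<exists>x. x \<noteq> None \<and> cnt n r2 i c x \<ge> (2 * n) div 3 + 1
      then (SOME x. x \<noteq> None \<and> cnt n r2 i c x \<ge> (2 * n) div 3 + 1, 2)
      else if \<exists>x. x \<noteq> None \<and> cnt n r2 i c x \<ge> n div 3 + 1
      then (SOME x. x \<noteq> None \<and> cnt n r2 i c x \<ge> n div 3 + 1, 1)
      else (None, 0))"

text \<open>Execution of MGC: malicious set B, initial vectors v', adversarial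
messages adv1 (step 1) and adv2 (step 2, arbitrary, hence may depend on anything).\<close>
definition mgc_run :: "nat \<Rightarrow> nat set \<Rightarrow> (nat \<Rightarrow> 'v vec) \<Rightarrow> 'v inbox \<Rightarrow> 'v inbox
                       \<Rightarrow> nat \<Rightarrow> nat \<Rightarrow> 'v option \<times> nat" where
  "mgc_run n B v' adv1 adv2 =
     (let r1 = step_inbox B v' adv1;
          r2 = step_inbox B (mgc_tilde n r1) adv2
      in mgc_output n r2)"

definition graded_consensus_outcome ::
  "nat \<Rightarrow> nat \<Rightarrow> nat set \<Rightarrow> (nat \<Rightarrow> 'v vec) \<Rightarrow> (nat \<Rightarrow> nat \<Rightarrow> 'v option \<times> nat) \<Rightarrow> bool" where
  "graded_consensus_outcome n m B v' out \<longleftrightarrow>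
     (let H = {0..<n} - B in
       (\<forall>i\<in>H. \<forall>c<m. snd (out i c) \<in> {0, 1, 2}) \<and>
       (\<forall>i\<in>H. \<forall>j\<in>H. \<forall>c<m. snd (out i c) \<le> snd (out j c) + 1) \<and>
       (\<forall>i\<in>H. \<forall>j\<in>H. \<forall>c<m. snd (out i c) > 0 \<and> snd (out j c) > 0 \<longrightarrow>
            fst (out i c) = fst (out j c) \<and> fst (out i c) \<noteq> None) \<and>
       (\<forall>c<m. \<forall>vc. (\<forall>i<n. v' i c = vc) \<longrightarrow>
            (\<forall>i\<in>H. out i c = (if vc \<noteq> None then (vc, 2) else (None, 0)))))"

definition MGC_is_graded_consensus :: "nat \<Rightarrow> nat \<Rightarrow> nat \<Rightarrow> bool" where
  "MGC_is_graded_consensus m n t \<longleftrightarrow>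
     (\<forall>(B::nat set) (v'::nat \<Rightarrow> 'v vec) adv1 adv2.
        B \<subseteq> {0..<n} \<and> card B \<le> t \<longrightarrow>
        graded_consensus_outcome n m B v' (mgc_run n B v' adv1 adv2))"

end

theory Submission
  imports Defs
begin

lemma quorum:
  fixes S1 S2 B :: "nat set"
  assumes "S1 \<subseteq> {0..<n}" "S2 \<subseteq> {0..<n}" "card S1 + card S2 > n + card B" "finite B"
  shows "\<exists>j\<in>S1\<inter>S2. j \<notin> B"
proof (rule ccontr)
  assume "\<not> ?thesis"
  hence "S1 \<inter> S2 \<subseteq> B" by blast
  hence a: "card (S1 \<inter> S2) \<le> card B" using assms(4) by (simp add: card_mono)
  have f1: "finite S1" "finite S2" using assms(1,2) finite_subset by auto
  have "card (S1 \<union> S2) \<le> n" using assms(1,2) by (metis card_atLeastLessThan card_mono finite_atLeastLessThan le_sup_iff diff_zero)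
  moreover have "card S1 + card S2 = card (S1 \<union> S2) + card (S1 \<inter> S2)" using f1 card_Un_Int by blast
  ultimately show False using a assms(3) by linarith
qed

lemma cnt_unique:
  assumes "cnt n r i c v \<ge> a" "cnt n r i c w \<ge> a" "2 * a > n"
  shows "v = w"
proof (rule ccontr)
  assume ne: "v \<noteq> w"
  let ?S = "\<lambda>v. {j \<in> {0..<n}. \<exists>w. r i j = Some w \<and> w c = v}"
  have d: "?S v \<inter> ?S w = {}" using ne by auto
  have fin: "finite (?S v)" "finite (?S w)" by auto
  have "card (?S v \<union> ?S w) \<le> n"
    by (metis (no_types, lifting) card_atLeastLessThan card_mono diff_zero finite_atLeastLessThan le_sup_iff mem_Collect_eq subsetI)
  moreover have "card (?S v \<union> ?S w) = card (?S v) + card (?S w)" using d fin card_Un_disjoint by blast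
  ultimately show False using assms unfolding cnt_def by linarith
qed

lemma cnt_lower:
  assumes "B \<subseteq> {0..<n}"
  shows "card {k \<in> {0..<n} - B. msg k c = v} \<le> cnt n (step_inbox B msg adv) i c v"
  unfolding cnt_def
  by (rule card_mono) (auto simp: step_inbox_def)

lemma cnt_upper:
  assumes "B \<subseteq> {0..<n}"
  shows "cnt n (step_inbox B msg adv) i c v \<le> card {k \<in> {0..<n} - B. msg k c = v} + card B"
proof -
  have fB: "finite B" using assms finite_subset by blast
  have "{j \<in> {0..<n}. \<exists>w. step_inbox B msg adv i j = Some w \<and> w c = v}
        \<subseteq> {k \<in> {0..<n} - B. msg k c = v} \<union> B"
    by (auto simp: step_inbox_def)
  hence "cnt n (step_inbox B msg adv) i c v \<le> card ({k \<in> {0..<n} - B. msg k c = v} \<union> B)"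
    unfolding cnt_def using fB by (intro card_mono) auto
  also have "\<dots> \<le> card {k \<in> {0..<n} - B. msg k c = v} + card B" by (rule card_Un_le)
  finally show ?thesis .
qed

lemma tilde_some:
  assumes "mgc_tilde n r i c = Some u"
  shows "cnt n r i c (Some u) \<ge> (2 * n) div 3 + 1"
proof -
  have ex: "\<exists>v. cnt n r i c v \<ge> (2 * n) div 3 + 1"
    using assms unfolding mgc_tilde_def by (auto split: if_splits)
  hence "mgc_tilde n r i c = (SOME v. cnt n r i c v \<ge> (2 * n) div 3 + 1)"
    unfolding mgc_tilde_def by simp
  with someI_ex[OF ex] assms show ?thesis by simp
qed

lemma tilde_eq:
  assumes "cnt n r i c v \<ge> (2 * n) div 3 + 1"
  shows "mgc_tilde n r i c = v"
proof -
  have ex: "\<exists>v. cnt n r i c v \<ge> (2 * n) div 3 + 1" using assms by blast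
  hence e: "mgc_tilde n r i c = (SOME v. cnt n r i c v \<ge> (2 * n) div 3 + 1)"
    unfolding mgc_tilde_def by simp
  have "2 * ((2 * n) div 3 + 1) > n" by presburger
  with someI_ex[OF ex] assms cnt_unique show ?thesis unfolding e by blast
qed

lemma out_snd: "snd (mgc_output n r i c) \<in> {0,1,2}"
  unfolding mgc_output_def by auto

lemma out_pos:
  assumes "snd (mgc_output n r i c) > 0"
  shows "fst (mgc_output n r i c) \<noteq> None \<and> cnt n r i c (fst (mgc_output n r i c)) \<ge> n div 3 + 1"
proof (cases "\<exists>x. x \<noteq> None \<and> cnt n r i c x \<ge> (2 * n) div 3 + 1")
  case True
  have "n div 3 + 1 \<le> (2 * n) div 3 + 1" by presburger
  then show ?thesis using someI_ex[OF True] unfolding mgc_output_def using True by auto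
next
  case False
  show ?thesis
  proof (cases "\<exists>x. x \<noteq> None \<and> cnt n r i c x \<ge> n div 3 + 1")
    case True
    then show ?thesis using someI_ex[OF True] False unfolding mgc_output_def by auto
  next
    case F2: False
    have "mgc_output n r i c = (None, 0)"
      unfolding mgc_output_def if_not_P[OF False] if_not_P[OF F2] by simp
    then show ?thesis using assms by simp
  qed
qed

lemma out_two:
  assumes "snd (mgc_output n r i c) = 2"
  shows "cnt n r i c (fst (mgc_output n r i c)) \<ge> (2 * n) div 3 + 1"
proof (cases "\<exists>x. x \<noteq> None \<and> cnt n r i c x \<ge> (2 * n) div 3 + 1")
  case True
  then show ?thesis using someI_ex[OF True] unfolding mgc_output_def by auto
next
  case False
  then show ?thesis using assms unfolding mgc_output_def by (auto split: if_splits)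
qed

lemma out_ge1:
  assumes "x \<noteq> None" "cnt n r i c x \<ge> n div 3 + 1"
  shows "snd (mgc_output n r i c) > 0"
  using assms unfolding mgc_output_def by auto

theorem theorem2:
  fixes m n :: nat
  assumes "m \<ge> 1" and "n \<ge> 1"
  shows "MGC_is_graded_consensus TYPE('v) m n ((n - 1) div 3)"
  unfolding MGC_is_graded_consensus_def
proof (intro allI impI)
  fix B :: "nat set" and v' :: "nat \<Rightarrow> 'v vec" and adv1 adv2
  assume BB: "B \<subseteq> {0..<n} \<and> card B \<le> (n - 1) div 3"
  hence Bs: "B \<subseteq> {0..<n}" and cB: "card B \<le> (n - 1) div 3" by auto
  have fB: "finite B" using Bs finite_subset by blast
  define H where "H = {0..<n} - B"
  have cH: "card H = n - card B" unfolding H_def using Bs fB by (simp add: card_Diff_subset)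
  define r1 where "r1 = step_inbox B v' adv1"
  define T where "T = mgc_tilde n r1"
  define r2 where "r2 = step_inbox B T adv2"
  define Out where "Out = mgc_output n r2"
  have run: "mgc_run n B v' adv1 adv2 = Out"
    unfolding mgc_run_def Out_def r2_def T_def r1_def Let_def by simp
  have ar1: "2 * ((2 * n) div 3 + 1) > n + (n - 1) div 3" by presburger
  have ar2: "(2 * n) div 3 + 1 \<ge> n div 3 + 1 + (n - 1) div 3" by presburger
  have ar3: "n - (n - 1) div 3 \<ge> (2 * n) div 3 + 1" using assms(2) by presburger
  have ar4: "n div 3 + 1 > (n - 1) div 3" by presburger
  have T2: "u = w" if "T i c = Some u" "T j c = Some w" for i j c u w
  proof -
    let ?S = "\<lambda>i v. {k \<in> {0..<n}. \<exists>w. r1 i k = Some w \<and> w c = v}"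
    have a1: "card (?S i (Some u)) \<ge> (2 * n) div 3 + 1"
      using tilde_some[of n r1 i c u] that(1) unfolding T_def cnt_def by simp
    have a2: "card (?S j (Some w)) \<ge> (2 * n) div 3 + 1"
      using tilde_some[of n r1 j c w] that(2) unfolding T_def cnt_def by simp
    obtain k where k: "k \<in> ?S i (Some u) \<inter> ?S j (Some w)" "k \<notin> B"
      using quorum[of "?S i (Some u)" n "?S j (Some w)" B] a1 a2 ar1 cB fB by fastforce
    thus ?thesis unfolding r1_def step_inbox_def by auto
  qed
  have wit: "\<exists>k\<in>H. T k c = x" if "cnt n r2 i c x \<ge> n div 3 + 1" for i c x
  proof (rule ccontr)
    assume "\<not> ?thesis"
    hence "{k \<in> {0..<n} - B. T k c = x} = {}" unfolding H_def by auto
    hence e: "card {k \<in> {0..<n} - B. T k c = x} = 0" by (simp only: card.empty)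
    show False using cnt_upper[OF Bs, where msg=T and c=c and v=x and adv=adv2 and i=i] that cB ar4 e unfolding r2_def by linarith
  qed
  show "graded_consensus_outcome n m B v' (mgc_run n B v' adv1 adv2)"
    unfolding graded_consensus_outcome_def Let_def run H_def[symmetric]
  proof (intro conjI ballI allI impI)
    fix i c show "snd (Out i c) \<in> {0,1,2}" unfolding Out_def by (rule out_snd)
  next
    fix i j c assume i: "i \<in> H" and j: "j \<in> H" and "c < m"
    show "snd (Out i c) \<le> snd (Out j c) + 1"
    proof (cases "snd (Out i c) = 2")
      case True
      let ?x = "fst (Out i c)"
      have "cnt n r2 i c ?x \<ge> (2 * n) div 3 + 1" using out_two True unfolding Out_def by blast
      hence "card {k \<in> {0..<n} - B. T k c = ?x} + card B \<ge> (2 * n) div 3 + 1"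
        using cnt_upper[OF Bs, where msg=T and c=c and v="fst (Out i c)" and adv=adv2 and i=i] unfolding r2_def by simp
      hence "cnt n r2 j c ?x \<ge> n div 3 + 1"
        using cnt_lower[OF Bs, where msg=T and c=c and v="fst (Out i c)" and adv=adv2 and i=j] cB ar2 unfolding r2_def by linarith
      moreover have "?x \<noteq> None" using out_pos True unfolding Out_def by (metis zero_less_numeral)
      ultimately have "snd (Out j c) > 0" unfolding Out_def by (metis out_ge1)
      with True show ?thesis by simp
    next
      case False
      then show ?thesis using out_snd[of n r2 i c] unfolding Out_def by auto
    qed
  next
    fix i j c assume i: "i \<in> H" and j: "j \<in> H" and "c < m"
      and pos: "0 < snd (Out i c) \<and> 0 < snd (Out j c)"
    have pi: "0 < snd (mgc_output n r2 i c)" using pos unfolding Out_def by (rule conjunct1)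
    have qi: "fst (Out i c) \<noteq> None \<and> n div 3 + 1 \<le> cnt n r2 i c (fst (Out i c))"
      using out_pos[OF pi] unfolding Out_def .
    obtain u where u: "fst (Out i c) = Some u" using qi by (cases "fst (Out i c)") auto
    have cu: "cnt n r2 i c (Some u) \<ge> n div 3 + 1" using qi u by simp
    have pj: "0 < snd (mgc_output n r2 j c)" using pos unfolding Out_def by (rule conjunct2)
    have qj: "fst (Out j c) \<noteq> None \<and> n div 3 + 1 \<le> cnt n r2 j c (fst (Out j c))"
      using out_pos[OF pj] unfolding Out_def .
    obtain w where w: "fst (Out j c) = Some w" using qj by (cases "fst (Out j c)") auto
    have cw: "cnt n r2 j c (Some w) \<ge> n div 3 + 1" using qj w by simp
    obtain k where "k \<in> H" "T k c = Some u" using wit[OF cu] by blast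
    moreover obtain k' where "k' \<in> H" "T k' c = Some w" using wit[OF cw] by blast
    ultimately have "u = w" using T2 by blast
    thus "fst (Out i c) = fst (Out j c)" using u w by simp
  next
    fix i j c assume "i \<in> H" and "j \<in> H" and "c < m"
      and pos: "0 < snd (Out i c) \<and> 0 < snd (Out j c)"
    have "0 < snd (mgc_output n r2 i c)" using pos unfolding Out_def by (rule conjunct1)
    from out_pos[OF this] show "fst (Out i c) \<noteq> None" unfolding Out_def by (rule conjunct1)
  next
    fix c vc i assume "c < m" and all: "\<forall>i<n. v' i c = vc" and i: "i \<in> H"
    have Hsub: "H \<subseteq> {0..<n}" unfolding H_def by auto
    have bigH: "card H \<ge> (2 * n) div 3 + 1" using cH cB ar3 by linarith
    have Tk: "T k c = vc" if "k \<in> H" for k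
    proof -
      have allk: "v' k c = vc" if "k \<in> {0..<n}" for k using all that by simp
      have eq: "{k \<in> {0..<n} - B. v' k c = vc} = H" unfolding H_def using allk by blast
      have "card H \<le> cnt n r1 k c vc"
        using cnt_lower[OF Bs, where msg=v' and c=c and v=vc and adv=adv1 and i=k] unfolding eq r1_def .
      hence "cnt n r1 k c vc \<ge> (2 * n) div 3 + 1" using bigH by linarith
      thus ?thesis unfolding T_def by (rule tilde_eq)
    qed
    have eq2: "{k \<in> {0..<n} - B. T k c = vc} = H" using Tk unfolding H_def by blast
    have "card H \<le> cnt n r2 i c vc"
      using cnt_lower[OF Bs, where msg=T and c=c and v=vc and adv=adv2 and i=i] unfolding eq2 r2_def .
    hence c2: "cnt n r2 i c vc \<ge> (2 * n) div 3 + 1" using bigH by linarith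
    show "Out i c = (if vc \<noteq> None then (vc, 2) else (None, 0))"
    proof (cases "vc = None")
      case False
      have ex: "\<exists>x. x \<noteq> None \<and> cnt n r2 i c x \<ge> (2 * n) div 3 + 1" using False c2 by blast
      let ?x = "SOME x. x \<noteq> None \<and> cnt n r2 i c x \<ge> (2 * n) div 3 + 1"
      have "?x \<noteq> None \<and> cnt n r2 i c ?x \<ge> (2 * n) div 3 + 1" by (rule someI_ex[OF ex])
      moreover have "2 * ((2 * n) div 3 + 1) > n" by presburger
      ultimately have "?x = vc" using cnt_unique[of _ n r2 i c ?x vc] c2 by blast
      hence "mgc_output n r2 i c = (vc, 2)" unfolding mgc_output_def if_P[OF ex] by (rule arg_cong[where f="\<lambda>x. (x, 2)"])
      thus ?thesis using False unfolding Out_def by simp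
    next
      case True
      have small: "cnt n r2 i c x < n div 3 + 1" if "x \<noteq> None" for x
      proof -
        have "{k \<in> {0..<n} - B. T k c = x} = {}" using Tk True that unfolding H_def by auto
        hence e: "card {k \<in> {0..<n} - B. T k c = x} = 0" by (simp only: card.empty)
        thus ?thesis using cnt_upper[OF Bs, where msg=T and c=c and v=x and adv=adv2 and i=i] cB ar4 e unfolding r2_def by linarith
      qed
      have "n div 3 + 1 \<le> (2 * n) div 3 + 1" by presburger
      hence n1: "\<not> (\<exists>x. x \<noteq> None \<and> cnt n r2 i c x \<ge> (2 * n) div 3 + 1)"
        using small by (meson le_trans not_le)
      have n2: "\<not> (\<exists>x. x \<noteq> None \<and> cnt n r2 i c x \<ge> n div 3 + 1)" using small by (meson not_le)
      have "mgc_output n r2 i c = (None, 0)" unfolding mgc_output_def if_not_P[OF n1] if_not_P[OF n2] ..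
      thus ?thesis using True unfolding Out_def by simp
    qed
  qed
qed

end
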